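(* Let $X$ be a locally compact Hausdorff space, let $p$ be a continuous projection on $X$ and $q\in\mathrm{RP}_{p.w.}(X)$ with $p\le q$ pointwise. Then $q-p\in\mathrm{RP}_{p.w.}(X)$.
   Context: $\mathcal K$ is the compact operators on $\ell_2(\mathbb N)$. A continuous projection on $X$ is a projection in $C_b(X,\mathcal K)$. $\mathrm{RP}_{p.w.}(X)$ is the set of maps $X\to B(\ell_2(\mathbb N))$ of the form $x\mapsto\chi_{(0,\infty)}(a(x))$ (the range projection of $a(x)$) for some $a\in C_0(X,\mathcal K)^+$. *)

theory Defs
  imports "HOL-Analysis.Analysis"
begin

typedef l2 = "{f :: nat \<Rightarrow> complex. summable (\<lambda>n. (cmod (f n))\<^sup>2)}"
  by (rule exI[of _ "\<lambda>_. 0"]) simp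

definition l2_add :: "l2 \<Rightarrow> l2 \<Rightarrow> l2" where
  "l2_add u v = Abs_l2 (\<lambda>n. Rep_l2 u n + Rep_l2 v n)"

definition l2_scale :: "complex \<Rightarrow> l2 \<Rightarrow> l2" where
  "l2_scale c v = Abs_l2 (\<lambda>n. c * Rep_l2 v n)"

definition l2_diff :: "l2 \<Rightarrow> l2 \<Rightarrow> l2" where
  "l2_diff u v = Abs_l2 (\<lambda>n. Rep_l2 u n - Rep_l2 v n)"

definition l2_inner :: "l2 \<Rightarrow> l2 \<Rightarrow> complex" where
  "l2_inner u v = (\<Sum>n. Rep_l2 u n * cnj (Rep_l2 v n))"

definition l2_norm :: "l2 \<Rightarrow> real" where
  "l2_norm v = sqrt (\<Sum>n. (cmod (Rep_l2 v n))\<^sup>2)"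

definition l2_closure :: "l2 set \<Rightarrow> l2 set" where
  "l2_closure S = {v. \<forall>e>0. \<exists>w\<in>S. l2_norm (l2_diff v w) < e}"

type_synonym op = "l2 \<Rightarrow> l2"

definition op_diff :: "op \<Rightarrow> op \<Rightarrow> op" where
  "op_diff S T = (\<lambda>v. l2_diff (S v) (T v))"

definition bounded_op :: "op \<Rightarrow> bool" where
  "bounded_op T \<longleftrightarrow>
     (\<forall>u v. T (l2_add u v) = l2_add (T u) (T v)) \<and>
     (\<forall>c v. T (l2_scale c v) = l2_scale c (T v)) \<and>
     (\<exists>C. \<forall>v. l2_norm (T v) \<le> C * l2_norm v)"

definition op_norm :: "op \<Rightarrow> real" where
  "op_norm T = Sup {l2_norm (T v) | v. l2_norm v \<le> 1}"

text \<open>Compact operator: bounded, and the image of the closed unit ball is totally bounded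
  (i.e. relatively compact, ell_2 being complete).\<close>
definition compact_op :: "op \<Rightarrow> bool" where
  "compact_op T \<longleftrightarrow> bounded_op T \<and>
     (\<forall>e>0. \<exists>F. finite F \<and>
        (\<forall>v. l2_norm v \<le> 1 \<longrightarrow> (\<exists>w\<in>F. l2_norm (l2_diff (T v) w) < e)))"

definition positive_op :: "op \<Rightarrow> bool" where
  "positive_op T \<longleftrightarrow> bounded_op T \<and>
     (\<forall>v. Im (l2_inner (T v) v) = 0 \<and> Re (l2_inner (T v) v) \<ge> 0)"

definition projection_op :: "op \<Rightarrow> bool" where
  "projection_op P \<longleftrightarrow> bounded_op P \<and> (\<forall>v. P (P v) = P v) \<and>
     (\<forall>u v. l2_inner (P u) v = l2_inner u (P v))"

definition is_range_projection :: "op \<Rightarrow> op \<Rightarrow> bool" where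
  "is_range_projection T P \<longleftrightarrow> projection_op P \<and> range P = l2_closure (range T)"

definition op_le :: "op \<Rightarrow> op \<Rightarrow> bool" where
  "op_le S T \<longleftrightarrow> positive_op (op_diff T S)"

definition norm_continuous :: "('a::topological_space \<Rightarrow> op) \<Rightarrow> bool" where
  "norm_continuous f \<longleftrightarrow>
     (\<forall>x e. e > 0 \<longrightarrow> (\<forall>\<^sub>F y in nhds x. op_norm (op_diff (f y) (f x)) < e))"

definition Cb_K :: "('a::topological_space \<Rightarrow> op) set" where
  "Cb_K = {f. (\<forall>x. compact_op (f x)) \<and> norm_continuous f \<and> (\<exists>B. \<forall>x. op_norm (f x) \<le> B)}"

definition C0_K :: "('a::topological_space \<Rightarrow> op) set" where
  "C0_K = {f. (\<forall>x. compact_op (f x)) \<and> norm_continuous f \<and>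
              (\<forall>e>0. \<exists>K. compact K \<and> (\<forall>x. x \<notin> K \<longrightarrow> op_norm (f x) < e))}"

definition C0_K_pos :: "('a::topological_space \<Rightarrow> op) set" where
  "C0_K_pos = {f \<in> C0_K. \<forall>x. positive_op (f x)}"

definition continuous_projection :: "('a::topological_space \<Rightarrow> op) \<Rightarrow> bool" where
  "continuous_projection p \<longleftrightarrow> p \<in> Cb_K \<and> (\<forall>x. projection_op (p x))"

definition RP_pw :: "('a::topological_space \<Rightarrow> op) set" where
  "RP_pw = {q. \<exists>a \<in> C0_K_pos. \<forall>x. is_range_projection (a x) (q x)}"

end

theory Submission
  imports Defs
begin


lemma l2_summable: "summable (\<lambda>n. (cmod (Rep_l2 v n))\<^sup>2)"
  using Rep_l2[of v] by simp

lemma sq_ineq: "(x + y)\<^sup>2 \<le> 2*x\<^sup>2 + 2*y\<^sup>2" for x y :: real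
proof -
  have "(x + y)\<^sup>2 = 2*x\<^sup>2 + 2*y\<^sup>2 - (x - y)\<^sup>2" by (simp add: power2_eq_square algebra_simps)
  then show ?thesis by simp
qed

lemma sq_ineq2: "x * y \<le> x\<^sup>2 + y\<^sup>2" if "x \<ge> 0" "y \<ge> 0" for x y :: real
proof -
  have "x * y = (x\<^sup>2 + y\<^sup>2 - (x - y)\<^sup>2) / 2" by (simp add: power2_eq_square algebra_simps)
  also have "\<dots> \<le> (x\<^sup>2 + y\<^sup>2)/2" by simp
  also have "\<dots> \<le> x\<^sup>2 + y\<^sup>2" by simp
  finally show ?thesis .
qed

lemma sq_summable_add:
  assumes "summable (\<lambda>n. (cmod (f n))\<^sup>2)" "summable (\<lambda>n. (cmod (g n))\<^sup>2)"
  shows "summable (\<lambda>n. (cmod (f n + g n))\<^sup>2)"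
proof (rule summable_comparison_test[where g="\<lambda>n. 2*(cmod (f n))\<^sup>2 + 2*(cmod (g n))\<^sup>2"])
  have "(cmod (f n + g n))\<^sup>2 \<le> 2*(cmod (f n))\<^sup>2 + 2*(cmod (g n))\<^sup>2" for n
  proof -
    have "(cmod (f n + g n))\<^sup>2 \<le> (cmod (f n) + cmod (g n))\<^sup>2"
      by (simp add: norm_triangle_ineq power_mono)
    also have "\<dots> \<le> 2*(cmod (f n))\<^sup>2 + 2*(cmod (g n))\<^sup>2"
      using sq_ineq[of "cmod (f n)" "cmod (g n)"] by simp
    finally show ?thesis .
  qed
  then show "\<exists>N. \<forall>n\<ge>N. norm ((cmod (f n + g n))\<^sup>2) \<le> 2*(cmod (f n))\<^sup>2 + 2*(cmod (g n))\<^sup>2"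
    by simp
  show "summable (\<lambda>n. 2*(cmod (f n))\<^sup>2 + 2*(cmod (g n))\<^sup>2)"
    using assms by (intro summable_add summable_mult)
qed

lemma sq_summable_scale:
  assumes "summable (\<lambda>n. (cmod (f n))\<^sup>2)"
  shows "summable (\<lambda>n. (cmod (c * f n))\<^sup>2)"
  using summable_mult[OF assms, of "(cmod c)^2"] by (simp add: norm_mult power_mult_distrib)

lemma sq_summable_uminus:
  assumes "summable (\<lambda>n. (cmod (f n))\<^sup>2)"
  shows "summable (\<lambda>n. (cmod (- f n))\<^sup>2)"
  using assms by simp

lemma prod_summable:
  assumes "summable (\<lambda>n. (cmod (f n))\<^sup>2)" "summable (\<lambda>n. (cmod (g n))\<^sup>2)"
  shows "summable (\<lambda>n. f n * cnj (g n))"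
proof (rule summable_norm_cancel, rule summable_comparison_test[where g="\<lambda>n. (cmod (f n))\<^sup>2 + (cmod (g n))\<^sup>2"])
  have "cmod (f n * cnj (g n)) \<le> (cmod (f n))\<^sup>2 + (cmod (g n))\<^sup>2" for n
  proof -
    have "cmod (f n * cnj (g n)) = cmod (f n) * cmod (g n)" by (simp add: norm_mult)
    also have "\<dots> \<le> (cmod (f n))\<^sup>2 + (cmod (g n))\<^sup>2"
      using sq_ineq2[of "cmod (f n)" "cmod (g n)"] by simp
    finally show ?thesis .
  qed
  then show "\<exists>N. \<forall>n\<ge>N. norm (norm (f n * cnj (g n))) \<le> (cmod (f n))\<^sup>2 + (cmod (g n))\<^sup>2" by simp
  show "summable (\<lambda>n. (cmod (f n))\<^sup>2 + (cmod (g n))\<^sup>2)" using assms by (rule summable_add)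
qed

lemma Rep_add: "Rep_l2 (l2_add u v) = (\<lambda>n. Rep_l2 u n + Rep_l2 v n)"
  unfolding l2_add_def by (rule Abs_l2_inverse) (simp add: sq_summable_add l2_summable)
lemma Rep_diff: "Rep_l2 (l2_diff u v) = (\<lambda>n. Rep_l2 u n - Rep_l2 v n)"
  unfolding l2_diff_def by (rule Abs_l2_inverse)
    (use sq_summable_add[OF l2_summable[of u] sq_summable_uminus[OF l2_summable[of v]]] in simp)
lemma Rep_scale: "Rep_l2 (l2_scale c v) = (\<lambda>n. c * Rep_l2 v n)"
  unfolding l2_scale_def by (rule Abs_l2_inverse) (simp add: sq_summable_scale l2_summable)
lemma Rep_uminus: "Rep_l2 (Abs_l2 (\<lambda>n. - Rep_l2 v n)) = (\<lambda>n. - Rep_l2 v n)"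
  by (rule Abs_l2_inverse) (simp add: l2_summable)
lemma Rep_zero: "Rep_l2 (Abs_l2 (\<lambda>n. 0)) = (\<lambda>n. 0)"
  by (rule Abs_l2_inverse) simp

lemma l2_eqI: "(\<And>n. Rep_l2 u n = Rep_l2 v n) \<Longrightarrow> u = v"
  by (metis Rep_l2_inject ext)

lemma inner_summable: "summable (\<lambda>n. Rep_l2 u n * cnj (Rep_l2 v n))"
  by (rule prod_summable[OF l2_summable l2_summable])

lemma l2_inner_cnj: "l2_inner v u = cnj (l2_inner u v)"
proof -
  have "(\<lambda>n. cnj (Rep_l2 u n * cnj (Rep_l2 v n))) sums cnj (l2_inner u v)"
    unfolding sums_cnj l2_inner_def using inner_summable by (rule summable_sums)
  then show ?thesis unfolding l2_inner_def by (simp add: mult.commute sums_iff)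
qed

lemma l2_inner_add_left: "l2_inner (l2_add u v) w = l2_inner u w + l2_inner v w"
  unfolding l2_inner_def Rep_add
  by (simp add: distrib_right suminf_add[OF inner_summable inner_summable])

lemma l2_inner_diff_left: "l2_inner (l2_diff u v) w = l2_inner u w - l2_inner v w"
  unfolding l2_inner_def Rep_diff
  by (simp add: left_diff_distrib suminf_diff[OF inner_summable inner_summable])

lemma l2_inner_scale_left: "l2_inner (l2_scale c u) w = c * l2_inner u w"
  unfolding l2_inner_def Rep_scale
  using suminf_mult[OF inner_summable, of c u w] by (simp add: mult.assoc)

lemma l2_inner_self: "l2_inner v v = complex_of_real ((l2_norm v)\<^sup>2)"
proof -
  have "(\<lambda>n. Rep_l2 v n * cnj (Rep_l2 v n)) = (\<lambda>n. complex_of_real ((cmod (Rep_l2 v n))\<^sup>2))"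
    by (rule ext) (metis complex_norm_square)
  moreover have "(\<lambda>n. complex_of_real ((cmod (Rep_l2 v n))\<^sup>2)) sums complex_of_real (\<Sum>n. (cmod (Rep_l2 v n))\<^sup>2)"
    using sums_of_real[OF summable_sums[OF l2_summable]] by simp
  ultimately show ?thesis unfolding l2_inner_def l2_norm_def
    by (simp add: sums_unique[symmetric] suminf_nonneg[OF l2_summable])
qed

instantiation l2 :: real_inner begin
definition zero_l2_def: "0 = Abs_l2 (\<lambda>_. 0)"
definition plus_l2_def: "u + v = l2_add u v"
definition minus_l2_def: "u - v = l2_diff u v"
definition uminus_l2_def: "- v = Abs_l2 (\<lambda>n. - Rep_l2 v n)"
definition scaleR_l2_def: "scaleR r v = l2_scale (of_real r) v"
definition norm_l2_def: "norm v = l2_norm v"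
definition dist_l2_def: "dist u v = norm (u - v)" for u v :: l2
definition sgn_l2_def: "sgn v = inverse (norm v) *\<^sub>R v" for v :: l2
definition uniformity_l2_def: "(uniformity :: (l2 \<times> l2) filter) = (INF e\<in>{0<..}. principal {(x, y). dist x y < e})"
definition open_l2_def: "open (U :: l2 set) = (\<forall>x\<in>U. \<forall>\<^sub>F (x', y) in uniformity. x' = x \<longrightarrow> y \<in> U)"
definition inner_l2_def: "inner u v = Re (l2_inner u v)"
lemma l2_ax1: "a + b + c = a + (b + c)" for a b c :: l2 unfolding plus_l2_def by (rule l2_eqI) (simp add: Rep_add add.assoc)
lemma l2_ax2: "a + b = b + a" for a b :: l2 unfolding plus_l2_def by (rule l2_eqI) (simp add: Rep_add add.commute)
lemma l2_ax3: "0 + a = a" for a :: l2 unfolding plus_l2_def zero_l2_def by (rule l2_eqI) (simp add: Rep_add Rep_zero)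
lemma l2_ax4: "- a + a = 0" for a :: l2 unfolding plus_l2_def zero_l2_def uminus_l2_def by (rule l2_eqI) (simp add: Rep_add Rep_zero Rep_uminus)
lemma l2_ax5: "a - b = a + - b" for a b :: l2 unfolding plus_l2_def minus_l2_def uminus_l2_def by (rule l2_eqI) (simp add: Rep_add Rep_diff Rep_uminus)
lemma l2_ax6: "r *\<^sub>R (a + b) = r *\<^sub>R a + r *\<^sub>R b" for a b :: l2 unfolding plus_l2_def scaleR_l2_def by (rule l2_eqI) (simp add: Rep_add Rep_scale distrib_left)
lemma l2_ax7: "(r + s) *\<^sub>R a = r *\<^sub>R a + s *\<^sub>R a" for a :: l2 unfolding plus_l2_def scaleR_l2_def by (rule l2_eqI) (simp add: Rep_add Rep_scale distrib_right)
lemma l2_ax8: "r *\<^sub>R s *\<^sub>R a = (r * s) *\<^sub>R a" for a :: l2 unfolding scaleR_l2_def by (rule l2_eqI) (simp add: Rep_scale mult.assoc)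
lemma l2_ax9: "1 *\<^sub>R a = a" for a :: l2 unfolding scaleR_l2_def by (rule l2_eqI) (simp add: Rep_scale)
lemma l2_ax10: "inner a b = inner b a" for a b :: l2 unfolding inner_l2_def by (subst l2_inner_cnj) simp
lemma l2_ax11: "inner (a + b) c = inner a c + inner b c" for a b c :: l2 unfolding inner_l2_def plus_l2_def by (simp add: l2_inner_add_left)
lemma l2_ax12: "inner (r *\<^sub>R a) b = r * inner a b" for a b :: l2 unfolding inner_l2_def scaleR_l2_def by (simp add: l2_inner_scale_left)
lemma l2_ax13: "0 \<le> inner a a" for a :: l2 unfolding inner_l2_def l2_inner_self by simp
lemma l2_ax14: "norm a = sqrt (inner a a)" for a :: l2 unfolding inner_l2_def norm_l2_def l2_inner_self
    by (simp add: l2_norm_def suminf_nonneg[OF l2_summable])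
lemma l2_ax15: "(inner a a = 0) = (a = 0)" for a :: l2
  proof
    assume "inner a a = 0"
    then have "(\<Sum>n. (cmod (Rep_l2 a n))\<^sup>2) = 0" unfolding inner_l2_def l2_inner_self l2_norm_def
      by (simp add: suminf_nonneg[OF l2_summable])
    then have "\<forall>n. (cmod (Rep_l2 a n))\<^sup>2 = 0" using suminf_eq_zero_iff[OF l2_summable] by simp
    then show "a = 0" unfolding zero_l2_def by (intro l2_eqI) (simp add: Rep_zero)
  next
    assume "a = 0" then show "inner a a = 0"
      unfolding inner_l2_def zero_l2_def l2_inner_def by (simp add: Rep_zero)
  qed
instance
proof
  fix a b c :: l2 and r s :: real and U :: "l2 set"
  show "a + b + c = a + (b + c)" by (rule l2_ax1)
  show "a + b = b + a" by (rule l2_ax2)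
  show "0 + a = a" by (rule l2_ax3)
  show "- a + a = 0" by (rule l2_ax4)
  show "a - b = a + - b" by (rule l2_ax5)
  show "r *\<^sub>R (a + b) = r *\<^sub>R a + r *\<^sub>R b" by (rule l2_ax6)
  show "(r + s) *\<^sub>R a = r *\<^sub>R a + s *\<^sub>R a" by (rule l2_ax7)
  show "r *\<^sub>R s *\<^sub>R a = (r * s) *\<^sub>R a" by (rule l2_ax8)
  show "1 *\<^sub>R a = a" by (rule l2_ax9)
  show "dist a b = norm (a - b)" by (rule dist_l2_def)
  show "sgn a = inverse (norm a) *\<^sub>R a" by (rule sgn_l2_def)
  show "(uniformity :: (l2 \<times> l2) filter) = (INF e\<in>{0<..}. principal {(x, y). dist x y < e})" by (rule uniformity_l2_def)
  show "open U = (\<forall>x\<in>U. \<forall>\<^sub>F (x', y) in uniformity. x' = x \<longrightarrow> y \<in> U)" by (rule open_l2_def)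
  show "inner a b = inner b a" by (rule l2_ax10)
  show "inner (a + b) c = inner a c + inner b c" by (rule l2_ax11)
  show "inner (r *\<^sub>R a) b = r * inner a b" by (rule l2_ax12)
  show "0 \<le> inner a a" by (rule l2_ax13)
  show "(inner a a = 0) = (a = 0)" by (rule l2_ax15)
  show "norm a = sqrt (inner a a)" by (rule l2_ax14)
qed
end




lemma norm_sq_l2: "(norm v)\<^sup>2 = (\<Sum>n. (cmod (Rep_l2 v n))\<^sup>2)"
  by (simp add: norm_l2_def l2_norm_def suminf_nonneg[OF l2_summable])

lemma Rep_minus: "Rep_l2 (u - v) = (\<lambda>n. Rep_l2 u n - Rep_l2 v n)"
  by (simp add: minus_l2_def Rep_diff)

lemma partial_le_norm: "(\<Sum>n<N. (cmod (Rep_l2 v n))\<^sup>2) \<le> (norm v)\<^sup>2"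
  unfolding norm_sq_l2 by (rule sum_le_suminf[OF l2_summable]) auto

lemma coord_le_norm: "cmod (Rep_l2 v n) \<le> norm v"
proof -
  have "(cmod (Rep_l2 v n))\<^sup>2 \<le> (\<Sum>i<Suc n. (cmod (Rep_l2 v i))\<^sup>2)"
    by (rule member_le_sum) auto
  also have "\<dots> \<le> (norm v)\<^sup>2" by (rule partial_le_norm)
  finally show ?thesis by (rule power2_le_imp_le) simp
qed

instance l2 :: complete_space
proof
  fix X :: "nat \<Rightarrow> l2" assume C: "Cauchy X"
  have cc: "Cauchy (\<lambda>k. Rep_l2 (X k) n)" for n
  proof (rule metric_CauchyI)
    fix e :: real assume "e > 0"
    then obtain M where M: "\<forall>m\<ge>M. \<forall>k\<ge>M. dist (X m) (X k) < e" using C metric_CauchyD by blast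
    show "\<exists>M. \<forall>m\<ge>M. \<forall>k\<ge>M. dist (Rep_l2 (X m) n) (Rep_l2 (X k) n) < e"
    proof (intro exI allI impI)
      fix m k assume "m \<ge> M" "k \<ge> M"
      have "dist (Rep_l2 (X m) n) (Rep_l2 (X k) n) = cmod (Rep_l2 (X m - X k) n)"
        by (simp add: dist_norm Rep_minus)
      also have "\<dots> \<le> norm (X m - X k)" by (rule coord_le_norm)
      also have "\<dots> < e" using M \<open>m \<ge> M\<close> \<open>k \<ge> M\<close> by (simp add: dist_norm)
      finally show "dist (Rep_l2 (X m) n) (Rep_l2 (X k) n) < e" .
    qed
  qed
  have "\<forall>n. \<exists>l. (\<lambda>k. Rep_l2 (X k) n) \<longlonglongrightarrow> l"
    using cc by (simp add: Cauchy_convergent_iff convergent_def)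
  then obtain g where g: "\<And>n. (\<lambda>k. Rep_l2 (X k) n) \<longlonglongrightarrow> g n" by metis
  have main: "\<exists>M. \<forall>k\<ge>M. summable (\<lambda>n. (cmod (Rep_l2 (X k) n - g n))\<^sup>2) \<and>
                 (\<Sum>n. (cmod (Rep_l2 (X k) n - g n))\<^sup>2) \<le> e\<^sup>2" if "e > 0" for e :: real
  proof -
    obtain M where M: "\<forall>m\<ge>M. \<forall>k\<ge>M. dist (X m) (X k) < e" using C metric_CauchyD \<open>e > 0\<close> by blast
    have bound: "(\<Sum>n<N. (cmod (Rep_l2 (X k) n - g n))\<^sup>2) \<le> e\<^sup>2" if "k \<ge> M" for k N
    proof -
      have lim: "(\<lambda>m. \<Sum>n<N. (cmod (Rep_l2 (X k) n - Rep_l2 (X m) n))\<^sup>2) \<longlonglongrightarrow> (\<Sum>n<N. (cmod (Rep_l2 (X k) n - g n))\<^sup>2)"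
        by (intro tendsto_intros g)
      have "(\<Sum>n<N. (cmod (Rep_l2 (X k) n - Rep_l2 (X m) n))\<^sup>2) \<le> e\<^sup>2" if "m \<ge> M" for m
      proof -
        have "(\<Sum>n<N. (cmod (Rep_l2 (X k) n - Rep_l2 (X m) n))\<^sup>2) \<le> (norm (X k - X m))\<^sup>2"
          using partial_le_norm[where N=N and v="X k - X m"] by (simp add: Rep_minus)
        also have "\<dots> \<le> e\<^sup>2" using M \<open>k \<ge> M\<close> \<open>m \<ge> M\<close>
          by (intro power_mono) (auto simp: dist_norm less_imp_le)
        finally show ?thesis .
      qed
      then show ?thesis by (intro LIMSEQ_le_const2[OF lim]) auto
    qed
    show ?thesis
    proof (intro exI allI impI conjI)
      fix k assume "k \<ge> M"
      show s: "summable (\<lambda>n. (cmod (Rep_l2 (X k) n - g n))\<^sup>2)"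
        by (rule summableI_nonneg_bounded[where x="e\<^sup>2"]) (use bound \<open>k \<ge> M\<close> in auto)
      show "(\<Sum>n. (cmod (Rep_l2 (X k) n - g n))\<^sup>2) \<le> e\<^sup>2"
        by (rule suminf_le_const[OF s]) (use bound \<open>k \<ge> M\<close> in auto)
    qed
  qed
  obtain k0 where "summable (\<lambda>n. (cmod (Rep_l2 (X k0) n - g n))\<^sup>2)"
    using main[of 1] by auto
  then have "summable (\<lambda>n. (cmod (Rep_l2 (X k0) n + - (Rep_l2 (X k0) n - g n)))\<^sup>2)"
    by (intro sq_summable_add l2_summable sq_summable_uminus)
  then have gs: "summable (\<lambda>n. (cmod (g n))\<^sup>2)" by simp
  define L where "L = Abs_l2 g"
  have RL: "Rep_l2 L = g" unfolding L_def by (rule Abs_l2_inverse) (simp add: gs)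
  have "X \<longlonglongrightarrow> L"
  proof (rule LIMSEQ_I)
    fix r :: real assume "r > 0"
    then obtain M where M: "\<forall>k\<ge>M. summable (\<lambda>n. (cmod (Rep_l2 (X k) n - g n))\<^sup>2) \<and>
                 (\<Sum>n. (cmod (Rep_l2 (X k) n - g n))\<^sup>2) \<le> (r/2)\<^sup>2" using main[of "r/2"] by auto
    show "\<exists>no. \<forall>n\<ge>no. norm (X n - L) < r"
    proof (intro exI allI impI)
      fix k assume "k \<ge> M"
      have "(norm (X k - L))\<^sup>2 \<le> (r/2)\<^sup>2" using M \<open>k \<ge> M\<close> by (simp add: norm_sq_l2 Rep_minus RL)
      then have "norm (X k - L) \<le> r/2" by (rule power2_le_imp_le) (use \<open>r > 0\<close> in simp)
      then show "norm (X k - L) < r" using \<open>r > 0\<close> by simp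
    qed
  qed
  then show "convergent X" by (auto simp: convergent_def)
qed




lemma parallelogram: "(norm (x + y))\<^sup>2 + (norm (x - y))\<^sup>2 = 2*(norm x)\<^sup>2 + 2*(norm y)\<^sup>2"
  for x y :: "'a::real_inner"
  by (simp add: power2_norm_eq_inner inner_add_left inner_add_right inner_diff_left inner_diff_right inner_commute)

lemma orth_from_min:
  fixes w s :: "'a::real_inner"
  assumes "\<And>t::real. (norm w)\<^sup>2 \<le> (norm (w - t *\<^sub>R s))\<^sup>2"
  shows "inner w s = 0"
proof -
  define c where "c = inner w s"
  define A where "A = inner s s"
  have A0: "A \<ge> 0" unfolding A_def by simp
  have key: "2 * t * c \<le> t\<^sup>2 * A" for t :: real
  proof -
    have "(norm (w - t *\<^sub>R s))\<^sup>2 = (norm w)\<^sup>2 - 2 * t * c + t\<^sup>2 * A"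
      unfolding c_def A_def power2_norm_eq_inner
      by (simp add: inner_diff_left inner_diff_right inner_commute power2_eq_square algebra_simps)
    then show ?thesis using assms[of t] by simp
  qed
  define B where "B = A + 1"
  have B0: "B > 0" unfolding B_def using A0 by simp
  define t where "t = c / B"
  have "2 * t * c * B\<^sup>2 \<le> t\<^sup>2 * A * B\<^sup>2"
    by (rule mult_right_mono[OF key]) simp
  moreover have "2 * t * c * B\<^sup>2 = 2 * c * c * (A + 1)"
    unfolding t_def using B0 by (simp add: power2_eq_square field_simps B_def)
  moreover have "t\<^sup>2 * A * B\<^sup>2 = c * c * A"
    unfolding t_def using B0 by (simp add: power2_eq_square field_simps)
  ultimately have "2 * c * c * (A + 1) \<le> c * c * A" by simp
  then have "c * c * (A + 2) \<le> 0" by (simp add: algebra_simps)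
  moreover have "c * c * (A + 2) \<ge> 0" using A0 by simp
  ultimately have "c * c * (A + 2) = 0" by linarith
  then show ?thesis using A0 unfolding c_def by simp
qed

lemma lim1: "(\<lambda>k. 1 / (real k + 1)) \<longlonglongrightarrow> 0"
  using LIMSEQ_inverse_real_of_nat by (simp add: inverse_eq_divide add.commute)

lemma projection_theorem:
  fixes v :: "'a::{real_inner, complete_space}" and S :: "'a set"
  assumes cl: "closed S" and sub: "subspace S"
  shows "\<exists>n\<in>S. \<forall>s\<in>S. inner (v - n) s = 0"
proof -
  have ne: "S \<noteq> {}" using sub by (auto simp: subspace_def)
  define d where "d = infdist v S"
  have d0: "d \<ge> 0" unfolding d_def by (rule infdist_nonneg)
  have dle: "d \<le> norm (v - s)" if "s \<in> S" for s
    unfolding d_def using infdist_le[OF that, of v] by (simp add: dist_norm)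
  have "\<exists>s\<in>S. norm (v - s) < d + 1 / (real k + 1)" for k :: nat
  proof -
    have "infdist v S < d + 1 / (real k + 1)" unfolding d_def by simp
    then have "(INF a\<in>S. dist v a) < d + 1 / (real k + 1)" using infdist_notempty[OF ne] by simp
    then show ?thesis using ne by (subst (asm) cINF_less_iff) (auto simp: dist_norm intro: bdd_belowI2[where m=0])
  qed
  then obtain s where sS: "\<And>k. s k \<in> S" and sd: "\<And>k. norm (v - s k) < d + 1 / (real k + 1)"
    by metis
  have sq: "(norm (v - s k))\<^sup>2 < d\<^sup>2 + e" if "(d + 1 / (real k + 1))\<^sup>2 - d\<^sup>2 \<le> e" for k e
  proof -
    have "(norm (v - s k))\<^sup>2 < (d + 1 / (real k + 1))\<^sup>2"
      using sd[of k] by (intro power_strict_mono) auto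
    then show ?thesis using that by linarith
  qed
  have epslim: "(\<lambda>k. (d + 1 / (real k + 1))\<^sup>2 - d\<^sup>2) \<longlonglongrightarrow> (d + 0)\<^sup>2 - d\<^sup>2"
    by (intro tendsto_intros lim1)
  have "Cauchy s"
  proof (rule metric_CauchyI)
    fix e :: real assume "e > 0"
    then have "e\<^sup>2 / 4 > 0" by simp
    have "eventually (\<lambda>k. (d + 1 / (real k + 1))\<^sup>2 - d\<^sup>2 < e\<^sup>2 / 4) sequentially"
      using order_tendstoD(2)[OF epslim, of "e\<^sup>2 / 4"] \<open>e\<^sup>2 / 4 > 0\<close> by (simp del: zero_less_divide_iff)
    then obtain K where K: "\<And>k. k \<ge> K \<Longrightarrow> (d + 1 / (real k + 1))\<^sup>2 - d\<^sup>2 < e\<^sup>2 / 4"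
      by (auto simp: eventually_sequentially)
    show "\<exists>M. \<forall>m\<ge>M. \<forall>n\<ge>M. dist (s m) (s n) < e"
    proof (intro exI allI impI)
      fix m n assume mn: "m \<ge> K" "n \<ge> K"
      have mid: "(s m + s n) /\<^sub>R 2 \<in> S" using sub sS by (intro subspace_scale subspace_add) auto
      have "2 * d \<le> norm ((v - s m) + (v - s n))"
      proof -
        have "(v - s m) + (v - s n) = 2 *\<^sub>R (v - (s m + s n) /\<^sub>R 2)" by (simp add: algebra_simps scaleR_2)
        then show ?thesis using dle[OF mid] by simp
      qed
      then have m4: "4 * d\<^sup>2 \<le> (norm ((v - s m) + (v - s n)))\<^sup>2"
        using power_mono[of "2*d" _ 2] d0 by (simp add: power_mult_distrib)
      have pm: "(norm (v - s m))\<^sup>2 < d\<^sup>2 + e\<^sup>2 / 4" using sq K mn less_imp_le by blast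
      have pn: "(norm (v - s n))\<^sup>2 < d\<^sup>2 + e\<^sup>2 / 4" using sq K mn less_imp_le by blast
      have "(norm (s m - s n))\<^sup>2 = (norm ((v - s n) - (v - s m)))\<^sup>2" by (simp add: algebra_simps)
      also have "\<dots> = 2*(norm (v - s m))\<^sup>2 + 2*(norm (v - s n))\<^sup>2 - (norm ((v - s m) + (v - s n)))\<^sup>2"
        using parallelogram[of "v - s m" "v - s n"] by (simp add: norm_minus_commute)
      also have "\<dots> < e\<^sup>2" using pm pn m4 by linarith
      finally have "(norm (s m - s n))\<^sup>2 < e\<^sup>2" .
      then have "norm (s m - s n) < e" using \<open>e > 0\<close> by (simp add: power_less_imp_less_base less_imp_le)
      then show "dist (s m) (s n) < e" by (simp add: dist_norm)
    qed
  qed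
  then obtain n where sn: "s \<longlonglongrightarrow> n" using Cauchy_convergent_iff convergent_def by blast
  have nS: "n \<in> S" using closed_sequentially[OF cl] sS sn by blast
  have "norm (v - n) \<le> d"
  proof (rule LIMSEQ_le[where X="\<lambda>k. norm (v - s k)" and Y="\<lambda>k. d + 1 / (real k + 1)"])
    show "(\<lambda>k. norm (v - s k)) \<longlonglongrightarrow> norm (v - n)" by (intro tendsto_intros sn)
    show "(\<lambda>k. d + 1 / (real k + 1)) \<longlonglongrightarrow> d"
      using tendsto_add[OF tendsto_const[of d] lim1] by simp
    show "\<exists>N. \<forall>k\<ge>N. norm (v - s k) \<le> d + 1 / (real k + 1)" using sd less_imp_le by blast
  qed
  then have nd: "norm (v - n) = d" using dle[OF nS] by simp
  show ?thesis
  proof (intro bexI ballI)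
    fix x assume "x \<in> S"
    show "inner (v - n) x = 0"
    proof (rule orth_from_min)
      fix t :: real
      have "n + t *\<^sub>R x \<in> S" using sub nS \<open>x \<in> S\<close> by (intro subspace_add subspace_scale) auto
      then have "d \<le> norm (v - (n + t *\<^sub>R x))" by (rule dle)
      then have "norm (v - n) \<le> norm (v - n - t *\<^sub>R x)" using nd by (simp add: algebra_simps)
      then show "(norm (v - n))\<^sup>2 \<le> (norm (v - n - t *\<^sub>R x))\<^sup>2" by (intro power_mono) auto
    qed
  qed (rule nS)
qed




lemma l2_add_eq[simp]: "l2_add u v = u + v" by (simp add: plus_l2_def)
lemma l2_diff_eq[simp]: "l2_diff u v = u - v" by (simp add: minus_l2_def)
lemma l2_norm_eq[simp]: "l2_norm v = norm v" by (simp add: norm_l2_def)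
lemma l2_scale_real: "l2_scale (complex_of_real r) v = r *\<^sub>R v" by (simp add: scaleR_l2_def)
lemma op_diff_apply[simp]: "op_diff S T v = S v - T v" by (simp add: op_diff_def)

lemma Re_l2_inner: "Re (l2_inner u v) = inner u v" by (simp add: inner_l2_def)

lemma l2_inner_add_left': "l2_inner (u + v) w = l2_inner u w + l2_inner v w"
  using l2_inner_add_left[of u v w] by simp
lemma l2_inner_diff_left': "l2_inner (u - v) w = l2_inner u w - l2_inner v w"
  using l2_inner_diff_left[of u v w] by simp
lemma l2_inner_add_right: "l2_inner w (u + v) = l2_inner w u + l2_inner w v"
proof -
  have "l2_inner w (u + v) = cnj (l2_inner (u + v) w)" by (rule l2_inner_cnj)
  also have "\<dots> = cnj (l2_inner u w) + cnj (l2_inner v w)" by (simp add: l2_inner_add_left')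
  also have "\<dots> = l2_inner w u + l2_inner w v" using l2_inner_cnj[of u w] l2_inner_cnj[of v w] by simp
  finally show ?thesis .
qed
lemma l2_inner_diff_right: "l2_inner w (u - v) = l2_inner w u - l2_inner w v"
proof -
  have "l2_inner w (u - v) = cnj (l2_inner (u - v) w)" by (rule l2_inner_cnj)
  also have "\<dots> = cnj (l2_inner u w) - cnj (l2_inner v w)" by (simp add: l2_inner_diff_left')
  also have "\<dots> = l2_inner w u - l2_inner w v" using l2_inner_cnj[of u w] l2_inner_cnj[of v w] by simp
  finally show ?thesis .
qed
lemma l2_inner_scale_right: "l2_inner u (l2_scale c v) = cnj c * l2_inner u v"
proof -
  have "l2_inner u (l2_scale c v) = cnj (l2_inner (l2_scale c v) u)" by (rule l2_inner_cnj)
  also have "\<dots> = cnj c * cnj (l2_inner v u)" by (simp add: l2_inner_scale_left)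
  also have "\<dots> = cnj c * l2_inner u v" using l2_inner_cnj[of v u] by simp
  finally show ?thesis .
qed
lemma l2_inner_scaleR_left: "l2_inner (r *\<^sub>R u) v = complex_of_real r * l2_inner u v"
  using l2_inner_scale_left[of "complex_of_real r" u v] by (simp add: l2_scale_real)
lemma l2_inner_scaleR_right: "l2_inner u (r *\<^sub>R v) = complex_of_real r * l2_inner u v"
  using l2_inner_scale_right[of u "complex_of_real r" v] by (simp add: l2_scale_real)
lemma l2_inner_self': "l2_inner v v = complex_of_real ((norm v)\<^sup>2)"
  using l2_inner_self[of v] by simp

lemma l2_inner_ext: assumes "\<And>w. l2_inner x w = l2_inner y w" shows "x = y"
proof -
  have "l2_inner (x - y) (x - y) = 0" using assms[of "x - y"] by (simp add: l2_inner_diff_left')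
  then have "norm (x - y) = 0" by (simp add: l2_inner_self')
  then show ?thesis by simp
qed

lemma closure_eq: "l2_closure S = closure S"
  by (rule set_eqI) (simp add: l2_closure_def closure_approachable dist_norm norm_minus_commute)

lemma bop_add: "bounded_op T \<Longrightarrow> T (u + v) = T u + T v"
  by (simp add: bounded_op_def)
lemma bop_scale: "bounded_op T \<Longrightarrow> T (l2_scale c v) = l2_scale c (T v)"
  unfolding bounded_op_def by blast
lemma bop_scaleR: "bounded_op T \<Longrightarrow> T (r *\<^sub>R v) = r *\<^sub>R T v"
  using bop_scale[of T "complex_of_real r" v] by (simp add: l2_scale_real)
lemma bop_linear: "bounded_op T \<Longrightarrow> linear T"
  by (rule linearI) (simp_all add: bop_add bop_scaleR)
lemma bop_diff: "bounded_op T \<Longrightarrow> T (u - v) = T u - T v"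
  using linear_diff[OF bop_linear] by blast
lemma bop_zero: "bounded_op T \<Longrightarrow> T 0 = 0"
  using linear_0[OF bop_linear] by blast
lemma bop_bound: "bounded_op T \<Longrightarrow> \<exists>C. \<forall>v. norm (T v) \<le> C * norm v"
  unfolding bounded_op_def by simp
lemma bop_bounded_linear: "bounded_op T \<Longrightarrow> bounded_linear T"
proof -
  assume b: "bounded_op T"
  then obtain C where C: "\<forall>v. norm (T v) \<le> C * norm v" using bop_bound by blast
  show ?thesis
  proof (rule bounded_linear_intro[where K=C])
    show "T (x + y) = T x + T y" for x y using b by (rule bop_add)
    show "T (r *\<^sub>R x) = r *\<^sub>R T x" for r x using b by (rule bop_scaleR)
    show "norm (T x) \<le> norm x * C" for x using C by (simp add: mult.commute)
  qed
qed

lemma op_norm_set_bdd: "bounded_op T \<Longrightarrow> bdd_above {norm (T v) | v. norm v \<le> 1}"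
proof -
  assume "bounded_op T"
  then obtain C where C: "\<forall>v. norm (T v) \<le> C * norm v" using bop_bound by blast
  show ?thesis
  proof (rule bdd_aboveI[where M="max C 0"])
    fix y assume "y \<in> {norm (T v) | v. norm v \<le> 1}"
    then obtain v where v: "y = norm (T v)" "norm v \<le> 1" by auto
    have "C * norm v \<le> max C 0"
    proof (cases "C \<ge> 0")
      case True then show ?thesis using v(2) mult_left_le[of "norm v" C] by simp
    next
      case False then show ?thesis by (simp add: mult_nonpos_nonneg)
    qed
    moreover have "y \<le> C * norm v" using C v(1) by simp
    ultimately show "y \<le> max C 0" by linarith
  qed
qed

lemma op_norm_def': "op_norm T = Sup {norm (T v) | v. norm v \<le> 1}"
  by (simp add: op_norm_def)

lemma op_norm_ge: "bounded_op T \<Longrightarrow> norm v \<le> 1 \<Longrightarrow> norm (T v) \<le> op_norm T"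
  unfolding op_norm_def' by (rule cSup_upper) (auto intro: op_norm_set_bdd)

lemma op_norm_nonneg: "bounded_op T \<Longrightarrow> 0 \<le> op_norm T"
proof -
  assume b: "bounded_op T"
  have "norm (T 0) \<le> op_norm T" using op_norm_ge[OF b, of 0] by simp
  then show ?thesis by (rule order_trans[OF norm_ge_zero])
qed

lemma op_norm_bound: assumes "bounded_op T" shows "norm (T v) \<le> op_norm T * norm v"
proof (cases "v = 0")
  case True then show ?thesis using bop_zero[OF assms] by simp
next
  case False
  define w where "w = (1 / norm v) *\<^sub>R v"
  have "norm w \<le> 1" using False by (simp add: w_def)
  then have "norm (T w) \<le> op_norm T" using op_norm_ge[OF assms] by blast
  moreover have "T w = (1 / norm v) *\<^sub>R T v" unfolding w_def using assms by (rule bop_scaleR)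
  ultimately have "norm (T v) / norm v \<le> op_norm T" by simp
  then show ?thesis using False by (simp add: divide_le_eq)
qed

lemma op_norm_le: assumes "C \<ge> 0" "\<And>v. norm (T v) \<le> C * norm v" shows "op_norm T \<le> C"
  unfolding op_norm_def'
proof (rule cSup_least)
  show "{norm (T v) |v. norm v \<le> 1} \<noteq> {}" by (auto intro: exI[of _ 0])
  fix y assume "y \<in> {norm (T v) |v. norm v \<le> 1}"
  then obtain v where v: "y = norm (T v)" "norm v \<le> 1" by auto
  have "C * norm v \<le> C" using v(2) assms(1) mult_left_le by blast
  then show "y \<le> C" using assms(2)[of v] v(1) by linarith
qed

lemma bop_compI:
  assumes "bounded_op S" "bounded_op T" shows "bounded_op (\<lambda>v. S (T v))"
  unfolding bounded_op_def
proof (intro conjI allI)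
  show "S (T (l2_add u v)) = l2_add (S (T u)) (S (T v))" for u v using assms by (simp add: bop_add)
  show "S (T (l2_scale c v)) = l2_scale c (S (T v))" for c v using assms by (simp add: bop_scale)
  show "\<exists>C. \<forall>v. l2_norm (S (T v)) \<le> C * l2_norm v"
  proof (intro exI allI)
    fix v
    have "norm (S (T v)) \<le> op_norm S * norm (T v)" using assms(1) by (rule op_norm_bound)
    also have "\<dots> \<le> op_norm S * (op_norm T * norm v)"
      using op_norm_bound[OF assms(2)] op_norm_nonneg[OF assms(1)] by (rule mult_left_mono)
    finally show "l2_norm (S (T v)) \<le> (op_norm S * op_norm T) * l2_norm v" by (simp add: mult.assoc)
  qed
qed

lemma scale_diff: "l2_scale c (u - v) = l2_scale c u - l2_scale c v"
  by (rule l2_eqI) (simp only: Rep_scale Rep_minus right_diff_distrib)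

lemma bop_diffI:
  assumes "bounded_op S" "bounded_op T" shows "bounded_op (op_diff S T)"
  unfolding bounded_op_def
proof (intro conjI allI)
  show "op_diff S T (l2_add u v) = l2_add (op_diff S T u) (op_diff S T v)" for u v
    using assms by (simp add: bop_add algebra_simps)
  show "op_diff S T (l2_scale c v) = l2_scale c (op_diff S T v)" for c v
    using assms by (simp add: bop_scale scale_diff)
  show "\<exists>C. \<forall>v. l2_norm (op_diff S T v) \<le> C * l2_norm v"
  proof (intro exI allI)
    fix v
    have "norm (S v - T v) \<le> norm (S v) + norm (T v)" by (rule norm_triangle_ineq4)
    also have "\<dots> \<le> op_norm S * norm v + op_norm T * norm v"
      using op_norm_bound[OF assms(1)] op_norm_bound[OF assms(2)] by (rule add_mono)
    finally show "l2_norm (op_diff S T v) \<le> (op_norm S + op_norm T) * l2_norm v" by (simp add: algebra_simps)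
  qed
qed

lemma bop_idI: "bounded_op (\<lambda>v. v)"
  unfolding bounded_op_def by (auto intro: exI[of _ 1])

lemma proj_bop: "projection_op P \<Longrightarrow> bounded_op P" by (simp add: projection_op_def)
lemma proj_idem: "projection_op P \<Longrightarrow> P (P v) = P v" by (simp add: projection_op_def)
lemma proj_sa: "projection_op P \<Longrightarrow> l2_inner (P u) v = l2_inner u (P v)" by (simp add: projection_op_def)

lemma proj_norm_sq: "projection_op P \<Longrightarrow> (norm (P v))\<^sup>2 = inner (P v) v"
proof -
  assume pr: "projection_op P"
  have "l2_inner (P v) (P v) = l2_inner (P (P v)) v" using proj_sa[OF pr] by simp
  then have "l2_inner (P v) (P v) = l2_inner (P v) v" using proj_idem[OF pr] by simp
  then have "Re (l2_inner (P v) (P v)) = Re (l2_inner (P v) v)" by simp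
  then show ?thesis by (simp add: Re_l2_inner power2_norm_eq_inner)
qed

lemma proj_norm_le: assumes "projection_op P" shows "norm (P v) \<le> norm v"
proof -
  have "(norm (P v))\<^sup>2 \<le> norm (P v) * norm v"
    using proj_norm_sq[OF assms, of v] norm_cauchy_schwarz[of "P v" v] by simp
  show ?thesis
  proof (cases "norm (P v) = 0")
    case True then show ?thesis by simp
  next
    case False
    then have "norm (P v) > 0" by simp
    moreover have "norm (P v) * norm (P v) \<le> norm (P v) * norm v"
      using \<open>(norm (P v))\<^sup>2 \<le> norm (P v) * norm v\<close> by (simp add: power2_eq_square)
    ultimately show ?thesis by (rule mult_left_le_imp_le[rotated])
  qed
qed

lemma proj_compl: assumes "projection_op p" shows "projection_op (\<lambda>v. v - p v)"
proof -
  have b: "bounded_op p" using assms by (rule proj_bop)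
  have "bounded_op (op_diff (\<lambda>v. v) p)" using bop_idI b by (rule bop_diffI)
  moreover have "op_diff (\<lambda>v. v) p = (\<lambda>v. v - p v)" by (rule ext) simp
  ultimately have bb: "bounded_op (\<lambda>v. v - p v)" by simp
  show ?thesis unfolding projection_op_def
  proof (intro conjI allI bb)
    fix u v
    show "u - p u - p (u - p u) = u - p u" using bop_diff[OF b] proj_idem[OF assms] by simp
    show "l2_inner (u - p u) v = l2_inner u (v - p v)"
      by (simp add: l2_inner_diff_left' l2_inner_diff_right proj_sa[OF assms])
  qed
qed

lemma proj_range_closed: assumes "projection_op R" shows "l2_closure (range R) = range R"
proof -
  have "range R = {y. R y = y}"
  proof
    show "range R \<subseteq> {y. R y = y}" using proj_idem[OF assms] by auto
    show "{y. R y = y} \<subseteq> range R"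
    proof
      fix y assume "y \<in> {y. R y = y}"
      then have "y = R y" by simp
      then show "y \<in> range R" by (rule image_eqI) simp
    qed
  qed
  moreover have "closed {y. R y = y}"
    by (rule closed_Collect_eq) (simp_all add: linear_continuous_on bop_bounded_linear proj_bop assms)
  ultimately show ?thesis by (simp add: closure_eq closure_closed)
qed

lemma compact_comp_left:
  assumes "compact_op T" "bounded_op S" shows "compact_op (\<lambda>v. S (T v))"
  unfolding compact_op_def
proof (intro conjI allI impI)
  have "bounded_op T" using assms(1) by (simp add: compact_op_def)
  then show "bounded_op (\<lambda>v. S (T v))" by (rule bop_compI[OF assms(2)])
  fix e :: real assume "e > 0"
  define K where "K = op_norm S + 1"
  have K0: "K > 0" unfolding K_def using op_norm_nonneg[OF assms(2)] by simp
  have eK: "e / K > 0" using \<open>e > 0\<close> K0 by simp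
  obtain F where F: "finite F" "\<forall>v. l2_norm v \<le> 1 \<longrightarrow> (\<exists>w\<in>F. l2_norm (l2_diff (T v) w) < e / K)"
    using assms(1)[unfolded compact_op_def] eK by blast
  show "\<exists>F. finite F \<and> (\<forall>v. l2_norm v \<le> 1 \<longrightarrow> (\<exists>w\<in>F. l2_norm (l2_diff (S (T v)) w) < e))"
  proof (intro exI conjI allI impI)
    show "finite (S ` F)" using F(1) by simp
    fix v assume "l2_norm v \<le> 1"
    then obtain w where w: "w \<in> F" "norm (T v - w) < e / K" using F(2) by auto
    have "norm (S (T v) - S w) = norm (S (T v - w))" using bop_diff[OF assms(2)] by simp
    also have "\<dots> \<le> op_norm S * norm (T v - w)" using assms(2) by (rule op_norm_bound)
    also have "\<dots> \<le> K * norm (T v - w)" unfolding K_def by (simp add: mult_right_mono)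
    also have "\<dots> < K * (e / K)" using w(2) K0 by (rule mult_strict_left_mono)
    also have "\<dots> = e" using K0 by simp
    finally show "\<exists>w\<in>S ` F. l2_norm (l2_diff (S (T v)) w) < e" using w(1) by auto
  qed
qed

lemma compact_comp_right:
  assumes "compact_op T" "bounded_op S" "\<And>v. norm (S v) \<le> norm v"
  shows "compact_op (\<lambda>v. T (S v))"
  unfolding compact_op_def
proof (intro conjI allI impI)
  have "bounded_op T" using assms(1) by (simp add: compact_op_def)
  then show "bounded_op (\<lambda>v. T (S v))" using assms(2) by (rule bop_compI)
  fix e :: real assume "e > 0"
  then obtain F where F: "finite F" "\<forall>v. l2_norm v \<le> 1 \<longrightarrow> (\<exists>w\<in>F. l2_norm (l2_diff (T v) w) < e)"
    using assms(1)[unfolded compact_op_def] by blast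
  show "\<exists>F. finite F \<and> (\<forall>v. l2_norm v \<le> 1 \<longrightarrow> (\<exists>w\<in>F. l2_norm (l2_diff (T (S v)) w) < e))"
  proof (intro exI conjI allI impI)
    show "finite F" by (rule F(1))
    fix v assume "l2_norm v \<le> 1"
    then have "l2_norm (S v) \<le> 1" using assms(3)[of v] by simp
    then show "\<exists>w\<in>F. l2_norm (l2_diff (T (S v)) w) < e" using F(2) by blast
  qed
qed




definition compl :: "op \<Rightarrow> op" where "compl p = (\<lambda>v. v - p v)"
definition bb :: "op \<Rightarrow> op \<Rightarrow> op" where "bb p a = (\<lambda>v. compl p (a (compl p v)))"

lemma quad_zero:
  fixes c d :: real assumes "\<And>t. 0 \<le> t * c + t\<^sup>2 * d" shows "c = 0"
proof -
  define B where "B = \<bar>d\<bar> + 1"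
  have B0: "B > 0" unfolding B_def by simp
  define t where "t = - c / B"
  have "0 \<le> t * c + t\<^sup>2 * d" by (rule assms)
  also have "t\<^sup>2 * d \<le> t\<^sup>2 * \<bar>d\<bar>" by (rule mult_left_mono) auto
  finally have "0 \<le> (t * c + t\<^sup>2 * \<bar>d\<bar>) * B\<^sup>2" by simp
  also have "(t * c + t\<^sup>2 * \<bar>d\<bar>) * B\<^sup>2 = - c * c"
  proof -
    have e1: "t * c * B\<^sup>2 = - c * c * B" unfolding t_def using B0 by (simp add: power2_eq_square field_simps)
    have e2: "t\<^sup>2 * \<bar>d\<bar> * B\<^sup>2 = c * c * \<bar>d\<bar>" unfolding t_def using B0 by (simp add: power2_eq_square field_simps)
    have "(t * c + t\<^sup>2 * \<bar>d\<bar>) * B\<^sup>2 = t * c * B\<^sup>2 + t\<^sup>2 * \<bar>d\<bar> * B\<^sup>2" by (simp add: algebra_simps)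
    also have "\<dots> = - c * c" unfolding e1 e2 by (simp add: B_def algebra_simps)
    finally show ?thesis .
  qed
  finally have "c * c \<le> 0" by simp
  then show ?thesis by (simp add: mult_le_0_iff) linarith
qed

lemma pos_bop: "positive_op A \<Longrightarrow> bounded_op A" by (simp add: positive_op_def)
lemma pos_form: "positive_op A \<Longrightarrow> Im (l2_inner (A v) v) = 0 \<and> 0 \<le> Re (l2_inner (A v) v)"
  by (simp add: positive_op_def)

lemma pos_kernel:
  assumes pos: "positive_op A" and z: "l2_inner (A m) m = 0"
  shows "l2_inner (A w) m = 0"
proof -
  have b: "bounded_op A" using pos by (rule pos_bop)
  have expand: "l2_inner (A (m + t *\<^sub>R y)) (m + t *\<^sub>R y) =
      complex_of_real t * (l2_inner (A m) y + l2_inner (A y) m) + complex_of_real (t\<^sup>2) * l2_inner (A y) y" for t y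
    using z by (simp add: bop_add[OF b] bop_scaleR[OF b] l2_inner_add_left' l2_inner_add_right
        l2_inner_scaleR_left l2_inner_scaleR_right algebra_simps power2_eq_square)
  have c0: "l2_inner (A m) y + l2_inner (A y) m = 0" for y
  proof -
    define c where "c = l2_inner (A m) y + l2_inner (A y) m"
    define d where "d = l2_inner (A y) y"
    have f: "Im (complex_of_real t * c + complex_of_real (t\<^sup>2) * d) = 0 \<and>
             0 \<le> Re (complex_of_real t * c + complex_of_real (t\<^sup>2) * d)" for t
      using pos_form[OF pos, of "m + t *\<^sub>R y"] unfolding expand c_def d_def .
    have dI: "Im d = 0" unfolding d_def using pos_form[OF pos] by blast
    have "Im c = 0" using f[of 1] dI by simp
    moreover have "Re c = 0"
    proof (rule quad_zero[where d="Re d"])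
      fix t :: real show "0 \<le> t * Re c + t\<^sup>2 * Re d" using f[of t] by simp
    qed
    ultimately show ?thesis unfolding c_def[symmetric] by (simp add: complex_eq_iff)
  qed
  define X where "X = l2_inner (A m) w"
  define Y where "Y = l2_inner (A w) m"
  have h1: "X + Y = 0" using c0[of w] unfolding X_def Y_def .
  have "l2_inner (A m) (l2_scale \<i> w) + l2_inner (A (l2_scale \<i> w)) m = 0" by (rule c0)
  then have h2: "- \<i> * X + \<i> * Y = 0"
    unfolding X_def Y_def by (simp add: bop_scale[OF b] l2_inner_scale_right l2_inner_scale_left)
  have X: "X = - Y" using h1 by (simp add: eq_neg_iff_add_eq_0)
  have "2 * \<i> * Y = - \<i> * X + \<i> * Y" unfolding X by (simp add: algebra_simps)
  then have "2 * \<i> * Y = 0" using h2 by simp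
  then have "Y = 0" by simp
  then show ?thesis unfolding Y_def .
qed

lemma subspace_closure_l2: "subspace S \<Longrightarrow> subspace (closure (S :: l2 set))"
proof -
  assume S: "subspace S"
  show ?thesis unfolding subspace_def
  proof (intro conjI ballI allI)
    show "0 \<in> closure S" using S closure_subset by (auto simp: subspace_def)
  next
    fix x y assume "x \<in> closure S" "y \<in> closure S"
    then obtain xs ys where "\<forall>n. xs n \<in> S" "xs \<longlonglongrightarrow> x" "\<forall>n. ys n \<in> S" "ys \<longlonglongrightarrow> y"
      by (meson closure_sequential)
    then have "\<forall>n. xs n + ys n \<in> S" "(\<lambda>n. xs n + ys n) \<longlonglongrightarrow> x + y"
      using S by (auto simp: subspace_def intro: tendsto_add)
    then show "x + y \<in> closure S" by (meson closure_sequential)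
  next
    fix c :: real and x assume "x \<in> closure S"
    then obtain xs where "\<forall>n. xs n \<in> S" "xs \<longlonglongrightarrow> x" by (meson closure_sequential)
    then have "\<forall>n. c *\<^sub>R xs n \<in> S" "(\<lambda>n. c *\<^sub>R xs n) \<longlonglongrightarrow> c *\<^sub>R x"
      using S by (auto simp: subspace_def intro: tendsto_scaleR)
    then show "c *\<^sub>R x \<in> closure S" by (meson closure_sequential)
  qed
qed

lemma range_subspace: "bounded_op T \<Longrightarrow> subspace (range T)"
  unfolding subspace_def
proof (intro conjI ballI allI)
  assume b: "bounded_op T"
  show "0 \<in> range T" using bop_zero[OF b] by (metis rangeI)
  fix x y assume "x \<in> range T" "y \<in> range T"
  then obtain u w where "x = T u" "y = T w" by auto
  then show "x + y \<in> range T" using bop_add[OF b, of u w] by (metis rangeI)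
next
  fix c :: real and x assume b: "bounded_op T" and "x \<in> range T"
  then obtain u where "x = T u" by auto
  then show "c *\<^sub>R x \<in> range T" using bop_scaleR[OF b, of c u] by (metis rangeI)
qed

lemma compl_apply: "compl p v = v - p v" by (simp add: compl_def)

lemma compl_proj: "projection_op p \<Longrightarrow> projection_op (compl p)"
  unfolding compl_def by (rule proj_compl)

lemma bb_bop: assumes "projection_op p" "bounded_op a" shows "bounded_op (bb p a)"
proof -
  have "bounded_op (compl p)" using compl_proj[OF assms(1)] by (rule proj_bop)
  then show ?thesis unfolding bb_def by (intro bop_compI[OF _ bop_compI[OF assms(2)]])
qed

lemma bb_compact: assumes "projection_op p" "compact_op a" shows "compact_op (bb p a)"
proof -
  have P: "bounded_op (compl p)" using compl_proj[OF assms(1)] by (rule proj_bop)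
  have "compact_op (\<lambda>v. a (compl p v))"
    by (rule compact_comp_right[OF assms(2) P proj_norm_le[OF compl_proj[OF assms(1)]]])
  then show ?thesis unfolding bb_def by (rule compact_comp_left[OF _ P])
qed

lemma bb_norm: assumes "projection_op p" "bounded_op a" shows "op_norm (bb p a) \<le> op_norm a"
proof (rule op_norm_le)
  show "0 \<le> op_norm a" using assms(2) by (rule op_norm_nonneg)
  fix v
  have "norm (bb p a v) \<le> norm (a (compl p v))"
    unfolding bb_def using proj_norm_le[OF compl_proj[OF assms(1)]] by simp
  also have "\<dots> \<le> op_norm a * norm (compl p v)" using assms(2) by (rule op_norm_bound)
  also have "\<dots> \<le> op_norm a * norm v"
    using proj_norm_le[OF compl_proj[OF assms(1)]] op_norm_nonneg[OF assms(2)] by (rule mult_left_mono)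
  finally show "norm (bb p a v) \<le> op_norm a * norm v" .
qed

lemma bb_inner: assumes "projection_op p" shows "l2_inner (bb p a v) v = l2_inner (a (compl p v)) (compl p v)"
  unfolding bb_def using proj_sa[OF compl_proj[OF assms]] by simp

lemma bb_pos: assumes "projection_op p" "positive_op a" shows "positive_op (bb p a)"
  unfolding positive_op_def
  using bb_bop[OF assms(1) pos_bop[OF assms(2)]] pos_form[OF assms(2)] bb_inner[OF assms(1)] by simp




lemma closure_sub: "S \<subseteq> l2_closure S"
  unfolding closure_eq by (rule closure_subset)

lemma pointwise_range:
  assumes pp: "projection_op p" and pq: "projection_op q" and pa: "positive_op a"
    and rq: "range q = l2_closure (range a)" and le: "positive_op (op_diff q p)"
  shows "is_range_projection (bb p a) (op_diff q p)"
proof -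
  have bp: "bounded_op p" using pp by (rule proj_bop)
  have bq: "bounded_op q" using pq by (rule proj_bop)
  have ba: "bounded_op a" using pa by (rule pos_bop)
  have qp: "q (p v) = p v" for v
  proof -
    define y where "y = p v"
    have py: "p y = y" unfolding y_def by (rule proj_idem[OF pp])
    have "0 \<le> Re (l2_inner (op_diff q p y) y)" using pos_form[OF le] by blast
    then have "0 \<le> inner (q y - y) y" using py by (simp add: Re_l2_inner)
    then have i1: "inner y y \<le> inner (q y) y" by (simp add: inner_diff_left)
    have i2: "inner (q y) y = inner (q y) (q y)" using proj_norm_sq[OF pq, of y] by (simp add: power2_norm_eq_inner)
    have "inner (y - q y) (y - q y) = inner y y - 2 * inner (q y) y + inner (q y) (q y)"
      by (simp add: inner_diff_left inner_diff_right inner_commute)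
    also have "\<dots> \<le> 0" using i1 i2 by simp
    finally have "inner (y - q y) (y - q y) \<le> 0" .
    then have "inner (y - q y) (y - q y) = 0" using inner_ge_zero[of "y - q y"] by linarith
    then have "y - q y = 0" by simp
    then show ?thesis unfolding y_def by simp
  qed
  have pqv: "p (q v) = p v" for v
  proof (rule l2_inner_ext)
    fix w
    have "l2_inner (p (q v)) w = l2_inner (q v) (p w)" by (rule proj_sa[OF pp])
    also have "\<dots> = l2_inner v (q (p w))" by (rule proj_sa[OF pq])
    also have "\<dots> = l2_inner v (p w)" by (simp add: qp)
    also have "\<dots> = l2_inner (p v) w" by (rule proj_sa[OF pp, symmetric])
    finally show "l2_inner (p (q v)) w = l2_inner (p v) w" .
  qed
  define r where "r = op_diff q p"
  have rv: "r v = q v - p v" for v unfolding r_def by simp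
  have br: "bounded_op r" unfolding r_def using bq bp by (rule bop_diffI)
  have rr: "r (r v) = r v" for v
    unfolding rv using bop_diff[OF bq] bop_diff[OF bp] proj_idem[OF pq] proj_idem[OF pp] qp pqv by simp
  have rproj: "projection_op r" unfolding projection_op_def
  proof (intro conjI allI br rr)
    fix u v show "l2_inner (r u) v = l2_inner u (r v)"
      unfolding rv by (simp add: l2_inner_diff_left' l2_inner_diff_right proj_sa[OF pq] proj_sa[OF pp])
  qed
  have bbb: "bounded_op (bb p a)" using pp ba by (rule bb_bop)
  have bpos: "positive_op (bb p a)" using pp pa by (rule bb_pos)
  have rb: "range (bb p a) \<subseteq> range r"
  proof
    fix y assume "y \<in> range (bb p a)"
    then obtain v where y: "y = bb p a v" by auto
    have "a (compl p v) \<in> range a" by simp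
    then have "a (compl p v) \<in> range q" using closure_sub[of "range a"] rq by blast
    then obtain u where u: "a (compl p v) = q u" by auto
    have "y = q u - p (q u)" unfolding y bb_def compl_apply[of p "a _"] u ..
    also have "\<dots> = r u" using pqv rv by simp
    finally show "y \<in> range r" by simp
  qed
  have N1: "closure (range (bb p a)) \<subseteq> range r"
    using closure_mono[OF rb] proj_range_closed[OF rproj] by (simp add: closure_eq)
  have N2: "range r \<subseteq> closure (range (bb p a))"
  proof
    fix v assume "v \<in> range r"
    then obtain u where "v = r u" by auto
    then have rvv: "r v = v" using rr by simp
    define N where "N = closure (range (bb p a))"
    have "closed N" unfolding N_def by simp
    moreover have "subspace N" unfolding N_def by (intro subspace_closure_l2 range_subspace bbb)
    ultimately obtain n where nN: "n \<in> N" and orth: "\<forall>s\<in>N. inner (v - n) s = 0"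
      using projection_theorem by blast
    define m where "m = v - n"
    have rn: "r n = n"
    proof -
      have "n \<in> range r" using N1 nN unfolding N_def by blast
      then show ?thesis using rr by auto
    qed
    have rm: "r m = m" unfolding m_def using bop_diff[OF br] rvv rn by simp
    have pm: "p m = 0"
    proof -
      have "p (r m) = 0" unfolding rv using bop_diff[OF bp] pqv proj_idem[OF pp] by simp
      then show ?thesis using rm by simp
    qed
    have Pm: "compl p m = m" using pm by (simp add: compl_apply)
    have qm: "q m = m"
    proof -
      have "q (r m) = r m" unfolding rv using bop_diff[OF bq] qp proj_idem[OF pq] by simp
      then show ?thesis using rm by simp
    qed
    have bmN: "bb p a m \<in> N" unfolding N_def by (rule subsetD[OF closure_subset]) simp
    have "inner m (bb p a m) = 0" using orth bmN unfolding m_def by blast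
    then have "Re (l2_inner (bb p a m) m) = 0" by (simp add: Re_l2_inner inner_commute)
    moreover have "Im (l2_inner (bb p a m) m) = 0" using pos_form[OF bpos] by blast
    ultimately have "l2_inner (bb p a m) m = 0" by (simp add: complex_eq_iff)
    then have "l2_inner (a m) m = 0" using bb_inner[OF pp, of a m] Pm by simp
    then have ker: "inner (a w) m = 0" for w using pos_kernel[OF pa] by (simp add: Re_l2_inner[symmetric])
    have "m \<in> closure (range a)" using qm rq closure_eq by (metis rangeI)
    then have approx: "\<forall>e>0. \<exists>y\<in>range a. dist y m < e" by (simp add: closure_approachable)
    have small: "norm m \<le> e" if "e > 0" for e
    proof -
      obtain y where y: "y \<in> range a" "dist y m < e" using approx \<open>e > 0\<close> by blast
      have "inner y m = 0" using y(1) ker by auto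
      then have "(norm m)\<^sup>2 = inner (m - y) m" by (simp add: power2_norm_eq_inner inner_diff_left)
      also have "\<dots> \<le> norm (m - y) * norm m" by (rule norm_cauchy_schwarz)
      also have "\<dots> \<le> e * norm m" using y(2) by (intro mult_right_mono) (auto simp: dist_norm norm_minus_commute)
      finally have "norm m * norm m \<le> e * norm m" by (simp add: power2_eq_square)
      then show ?thesis
        by (cases "norm m = 0") (use \<open>e > 0\<close> in auto)
    qed
    have "norm m = 0"
    proof (rule ccontr)
      assume "norm m \<noteq> 0"
      then have "norm m > 0" by simp
      then have "norm m \<le> norm m / 2" using small[of "norm m / 2"] by simp
      then show False using \<open>norm m > 0\<close> by simp
    qed
    then have "v = n" unfolding m_def by simp
    then show "v \<in> closure (range (bb p a))" using nN unfolding N_def by simp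
  qed
  show ?thesis unfolding is_range_projection_def r_def[symmetric]
    using rproj N1 N2 by (simp add: closure_eq)
qed




lemma cont_bound:
  assumes ppx: "projection_op px" and ppy: "projection_op py" and bax: "bounded_op ax" and bay: "bounded_op ay"
    and dp: "op_norm (op_diff py px) \<le> \<delta>" and da: "op_norm (op_diff ay ax) \<le> \<delta>" and d0: "\<delta> \<ge> 0"
  shows "op_norm (op_diff (bb py ay) (bb px ax)) \<le> \<delta> * (2 * op_norm ax + \<delta> + 1)"
proof (rule op_norm_le)
  define A where "A = op_norm ax"
  have A0: "A \<ge> 0" unfolding A_def using bax by (rule op_norm_nonneg)
  show "0 \<le> \<delta> * (2 * op_norm ax + \<delta> + 1)" using A0 d0 unfolding A_def by simp
  fix v
  have bPy: "bounded_op (compl py)" using compl_proj[OF ppy] by (rule proj_bop)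
  have bPx: "bounded_op (compl px)" using compl_proj[OF ppx] by (rule proj_bop)
  have bdp: "bounded_op (op_diff py px)" using proj_bop[OF ppy] proj_bop[OF ppx] by (rule bop_diffI)
  have bda: "bounded_op (op_diff ay ax)" using bay bax by (rule bop_diffI)
  have nPy: "norm (compl py z) \<le> norm z" for z using compl_proj[OF ppy] by (rule proj_norm_le)
  have nPx: "norm (compl px z) \<le> norm z" for z using compl_proj[OF ppx] by (rule proj_norm_le)
  have ndp: "norm (py z - px z) \<le> \<delta> * norm z" for z
  proof -
    have "norm (py z - px z) \<le> op_norm (op_diff py px) * norm z" using op_norm_bound[OF bdp, of z] by simp
    also have "\<dots> \<le> \<delta> * norm z" using dp by (rule mult_right_mono) simp
    finally show ?thesis .
  qed
  have nda: "norm (ay z - ax z) \<le> \<delta> * norm z" for z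
  proof -
    have "norm (ay z - ax z) \<le> op_norm (op_diff ay ax) * norm z" using op_norm_bound[OF bda, of z] by simp
    also have "\<dots> \<le> \<delta> * norm z" using da by (rule mult_right_mono) simp
    finally show ?thesis .
  qed
  have nax: "norm (ax z) \<le> A * norm z" for z unfolding A_def by (rule op_norm_bound[OF bax])
  define u where "u = compl py v - compl px v"
  define w where "w = ax (compl px v)"
  have ident: "op_diff (bb py ay) (bb px ax) v =
      compl py (ay u) + compl py (ay (compl px v) - ax (compl px v)) + (compl py w - compl px w)"
    unfolding u_def w_def op_diff_apply bb_def bop_diff[OF bPy] bop_diff[OF bay] by (simp add: algebra_simps)
  have nu: "norm u \<le> \<delta> * norm v"
  proof -
    have "u = - (py v - px v)" unfolding u_def compl_apply by (simp add: algebra_simps)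
    then show ?thesis using ndp[of v] by (simp add: norm_minus_commute)
  qed
  have t1: "norm (compl py (ay u)) \<le> (A + \<delta>) * (\<delta> * norm v)"
  proof -
    have e: "ay u = ax u + (ay u - ax u)" by simp
    have "norm (compl py (ay u)) \<le> norm (ay u)" by (rule nPy)
    also have "\<dots> \<le> norm (ax u) + norm (ay u - ax u)" by (subst e, rule norm_triangle_ineq)
    also have "\<dots> \<le> A * norm u + \<delta> * norm u" using nax[of u] nda[of u] by (rule add_mono)
    also have "\<dots> = (A + \<delta>) * norm u" by (simp add: algebra_simps)
    also have "\<dots> \<le> (A + \<delta>) * (\<delta> * norm v)" using nu A0 d0 by (intro mult_left_mono) auto
    finally show ?thesis .
  qed
  have t2: "norm (compl py (ay (compl px v) - ax (compl px v))) \<le> \<delta> * norm v"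
  proof -
    have "norm (compl py (ay (compl px v) - ax (compl px v))) \<le> norm (ay (compl px v) - ax (compl px v))" by (rule nPy)
    also have "\<dots> \<le> \<delta> * norm (compl px v)" by (rule nda)
    also have "\<dots> \<le> \<delta> * norm v" using nPx[of v] d0 by (rule mult_left_mono)
    finally show ?thesis .
  qed
  have t3: "norm (compl py w - compl px w) \<le> \<delta> * (A * norm v)"
  proof -
    have "compl py w - compl px w = - (py w - px w)" unfolding compl_apply by (simp add: algebra_simps)
    then have "norm (compl py w - compl px w) = norm (py w - px w)" by (simp add: norm_minus_commute)
    also have "\<dots> \<le> \<delta> * norm w" by (rule ndp)
    also have "\<dots> \<le> \<delta> * (A * norm v)"
    proof (rule mult_left_mono[OF _ d0])
      have "norm w \<le> A * norm (compl px v)" unfolding w_def by (rule nax)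
      also have "\<dots> \<le> A * norm v" using nPx[of v] A0 by (rule mult_left_mono)
      finally show "norm w \<le> A * norm v" .
    qed
    finally show ?thesis .
  qed
  have "norm (op_diff (bb py ay) (bb px ax) v) \<le>
      norm (compl py (ay u)) + norm (compl py (ay (compl px v) - ax (compl px v))) + norm (compl py w - compl px w)"
    unfolding ident by (rule order_trans[OF norm_triangle_ineq add_right_mono[OF norm_triangle_ineq]])
  also have "\<dots> \<le> (A + \<delta>) * (\<delta> * norm v) + \<delta> * norm v + \<delta> * (A * norm v)"
    using t1 t2 t3 by linarith
  also have "\<dots> = \<delta> * (2 * op_norm ax + \<delta> + 1) * norm v" unfolding A_def by (simp add: algebra_simps)
  finally show "norm (op_diff (bb py ay) (bb px ax) v) \<le> \<delta> * (2 * op_norm ax + \<delta> + 1) * norm v" .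
qed

theorem proposition2p9:
  fixes p q :: "'a::t2_space \<Rightarrow> op"
  assumes "locally_compact_space (euclidean :: 'a topology)"
    and "continuous_projection p"
    and "q \<in> RP_pw"
    and "\<forall>x. op_le (p x) (q x)"
  shows "(\<lambda>x. op_diff (q x) (p x)) \<in> RP_pw"
proof -
  have pp: "\<And>x. projection_op (p x)" using assms(2) unfolding continuous_projection_def by auto
  have pcont: "norm_continuous p" using assms(2) unfolding continuous_projection_def Cb_K_def by auto
  from assms(3) obtain a where aC: "a \<in> C0_K_pos" and ar: "\<And>x. is_range_projection (a x) (q x)"
    unfolding RP_pw_def by auto
  have acomp: "\<And>x. compact_op (a x)" and acont: "norm_continuous a"
    and adecay: "\<And>e. e > 0 \<Longrightarrow> \<exists>K. compact K \<and> (\<forall>x. x \<notin> K \<longrightarrow> op_norm (a x) < e)"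
    and apos: "\<And>x. positive_op (a x)"
    using aC unfolding C0_K_pos_def C0_K_def by auto
  have ba: "\<And>x. bounded_op (a x)" using apos by (rule pos_bop)
  define b where "b = (\<lambda>x. bb (p x) (a x))"
  have bcomp: "\<forall>x. compact_op (b x)" unfolding b_def using pp acomp by (blast intro: bb_compact)
  have bpos: "\<forall>x. positive_op (b x)" unfolding b_def using pp apos by (blast intro: bb_pos)
  have bdecay: "\<forall>e>0. \<exists>K. compact K \<and> (\<forall>x. x \<notin> K \<longrightarrow> op_norm (b x) < e)"
  proof (intro allI impI)
    fix e :: real assume "e > 0"
    then obtain K where K: "compact K" "\<forall>x. x \<notin> K \<longrightarrow> op_norm (a x) < e" using adecay by blast
    show "\<exists>K. compact K \<and> (\<forall>x. x \<notin> K \<longrightarrow> op_norm (b x) < e)"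
    proof (intro exI conjI allI impI)
      show "compact K" by (rule K(1))
      fix x assume "x \<notin> K"
      have "op_norm (b x) \<le> op_norm (a x)" unfolding b_def by (rule bb_norm[OF pp ba])
      then show "op_norm (b x) < e" using K(2) \<open>x \<notin> K\<close> by fastforce
    qed
  qed
  have bcont: "norm_continuous b" unfolding norm_continuous_def
  proof (intro allI impI)
    fix x and e :: real assume "e > 0"
    define A where "A = op_norm (a x)"
    have A0: "A \<ge> 0" unfolding A_def by (rule op_norm_nonneg[OF ba])
    define \<delta> where "\<delta> = min 1 (e / (2 * A + 3))"
    have d0: "\<delta> > 0" unfolding \<delta>_def using \<open>e > 0\<close> A0 by simp
    have d1: "\<delta> \<le> 1" unfolding \<delta>_def by simp
    have "\<delta> \<le> e / (2 * A + 3)" unfolding \<delta>_def by simp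
    then have d2: "\<delta> * (2 * A + 3) \<le> e" using A0 by (simp add: pos_le_divide_eq)
    have ev: "\<forall>\<^sub>F y in nhds x. op_norm (op_diff (p y) (p x)) < \<delta> \<and> op_norm (op_diff (a y) (a x)) < \<delta>"
    proof (rule eventually_conj)
      show "\<forall>\<^sub>F y in nhds x. op_norm (op_diff (p y) (p x)) < \<delta>"
        using pcont d0 unfolding norm_continuous_def by simp
      show "\<forall>\<^sub>F y in nhds x. op_norm (op_diff (a y) (a x)) < \<delta>"
        using acont d0 unfolding norm_continuous_def by simp
    qed
    show "\<forall>\<^sub>F y in nhds x. op_norm (op_diff (b y) (b x)) < e"
    proof (rule eventually_mono[OF ev])
      fix y assume y: "op_norm (op_diff (p y) (p x)) < \<delta> \<and> op_norm (op_diff (a y) (a x)) < \<delta>"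
      have "op_norm (op_diff (b y) (b x)) \<le> \<delta> * (2 * op_norm (a x) + \<delta> + 1)"
        unfolding b_def by (rule cont_bound[OF pp pp ba ba]) (use y d0 in auto)
      also have "\<dots> \<le> \<delta> * (2 * A + 2)" unfolding A_def using d1 d0 by (intro mult_left_mono) auto
      also have "\<dots> < e" using d2 d0 by (simp add: algebra_simps)
      finally show "op_norm (op_diff (b y) (b x)) < e" .
    qed
  qed
  have bC: "b \<in> C0_K_pos" unfolding C0_K_pos_def C0_K_def using bcomp bcont bdecay bpos by blast
  have brp: "\<forall>x. is_range_projection (b x) (op_diff (q x) (p x))"
  proof
    fix x
    have pq: "projection_op (q x)" and rq: "range (q x) = l2_closure (range (a x))"
      using ar[of x] unfolding is_range_projection_def by auto
    have le: "positive_op (op_diff (q x) (p x))" using assms(4) unfolding op_le_def by blast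
    show "is_range_projection (b x) (op_diff (q x) (p x))"
      unfolding b_def by (rule pointwise_range[OF pp pq apos rq le])
  qed
  show ?thesis unfolding RP_pw_def using bC brp by blast
qed


end
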